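(* Let $n, r, d$ be positive integers with $n\geqslant r+1$ and $d\geqslant2$. Then $\mathcal{A}_r^d$ is a percolating set of $K_n^d$ in the $r$-neighbor bootstrap percolation process.
   Context: All graphs are finite, simple and undirected. For a nonnegative integer $r$ and a graph $G$, the $r$-neighbor bootstrap percolation process on $G$ starts with a set $A_0\subseteq V(G)$ of initially active vertices, and for $i\geqslant 1$, $A_i=A_{i-1}\cup\{v\in V(G) : |N(v)\cap A_{i-1}|\geqslant r\}$. The set $A_0$ is a percolating set if $\bigcup_{i\geqslant 0}A_i=V(G)$. $K_n^d$ has vertex set $[\![n]\!]^d$, where $[\![n]\!]=\{0,1,\ldots,n-1\}$, and two vertices are adjacent iff they differ in exactly one coordinate. For $t=(t_1,\ldots,t_d)\in\{0,1\}^d$ and $P\subseteq[\![n]\!]^d$, let $P(t)$ be the set of $(x_1,\ldots,x_d)\in[\![n]\!]^d$ for which there is $(p_1,\ldots,p_d)\in P$ with $x_i=t_i(n-1-p_i)+(1-t_i)p_i$ for all $i$. Let $A_r^d=\{(x_1,\ldots,x_d)\in[\![n]\!]^d : \sum_{i=1}^d x_i\leqslant\lceil r/2\rceil-1\}$, let $T=\{(t_1,\ldots,t_d)\in\{0,1\}^d : t_1=t_2\}$, and $\mathcal{A}_r^d=\bigcup_{t\in T}A_r^d(t)$. *)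

theory Defs
  imports Complex_Main
begin

definition bp_step :: "'a set \<Rightarrow> ('a \<Rightarrow> 'a \<Rightarrow> bool) \<Rightarrow> nat \<Rightarrow> 'a set \<Rightarrow> 'a set" where
  "bp_step V E r A = A \<union> {v \<in> V. card {u \<in> V. E v u \<and> u \<in> A} \<ge> r}"

definition bp_active :: "'a set \<Rightarrow> ('a \<Rightarrow> 'a \<Rightarrow> bool) \<Rightarrow> nat \<Rightarrow> 'a set \<Rightarrow> nat \<Rightarrow> 'a set" where
  "bp_active V E r A0 i = (bp_step V E r ^^ i) A0"

definition percolating :: "'a set \<Rightarrow> ('a \<Rightarrow> 'a \<Rightarrow> bool) \<Rightarrow> nat \<Rightarrow> 'a set \<Rightarrow> bool" where
  "percolating V E r A0 \<longleftrightarrow> A0 \<subseteq> V \<and> (\<Union>i. bp_active V E r A0 i) = V"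

text \<open>The Hamming graph K_n^d: vertices are lists of length d with entries in {0..n-1}
  (coordinate i of the paper is list index i-1); adjacent iff they differ in exactly one coordinate.\<close>

definition hverts :: "nat \<Rightarrow> nat \<Rightarrow> nat list set" where
  "hverts n d = {x. length x = d \<and> (\<forall>i<d. x ! i < n)}"

definition hadj :: "nat \<Rightarrow> nat list \<Rightarrow> nat list \<Rightarrow> bool" where
  "hadj d x y \<longleftrightarrow> card {i. i < d \<and> x ! i \<noteq> y ! i} = 1"

definition reflect :: "nat \<Rightarrow> nat \<Rightarrow> nat list set \<Rightarrow> nat list \<Rightarrow> nat list set" where
  "reflect n d P t = {x \<in> hverts n d. \<exists>p\<in>P. \<forall>i<d.
      x ! i = t ! i * (n - 1 - p ! i) + (1 - t ! i) * p ! i}"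

definition base_set :: "nat \<Rightarrow> nat \<Rightarrow> nat \<Rightarrow> nat list set" where
  "base_set n d r = {x \<in> hverts n d. real_of_int (int (sum_list x)) \<le> real_of_int (\<lceil>real r / 2\<rceil> - 1)}"

definition Tset :: "nat \<Rightarrow> nat list set" where
  "Tset d = {t. length t = d \<and> set t \<subseteq> {0, 1} \<and> t ! 0 = t ! 1}"

definition calA :: "nat \<Rightarrow> nat \<Rightarrow> nat \<Rightarrow> nat list set" where
  "calA n d r = (\<Union>t\<in>Tset d. reflect n d (base_set n d r) t)"

end

theory Submission
  imports Defs
begin

lemma plane_cl:
  fixes n K :: nat and Q :: "nat \<Rightarrow> nat \<Rightarrow> bool"
  assumes cl: "\<And>a b. a < n \<Longrightarrow> b < n \<Longrightarrow>
        2*K \<le> card {a'. a' < n \<and> a' \<noteq> a \<and> Q a' b} + card {b'. b' < n \<and> b' \<noteq> b \<and> Q a b'} \<Longrightarrow> Q a b"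
    and "a < n" "b < n"
    and A: "A \<subseteq> {a'. a' < n \<and> a' \<noteq> a \<and> Q a' b}"
    and B: "B \<subseteq> {b'. b' < n \<and> b' \<noteq> b \<and> Q a b'}"
    and c: "2*K \<le> card A + card B"
  shows "Q a b"
proof -
  have "card A \<le> card {a'. a' < n \<and> a' \<noteq> a \<and> Q a' b}"
    by (rule card_mono[OF _ A]) auto
  moreover have "card B \<le> card {b'. b' < n \<and> b' \<noteq> b \<and> Q a b'}"
    by (rule card_mono[OF _ B]) auto
  ultimately show ?thesis using cl[OF assms(2,3)] c by linarith
qed

lemma plane_B1:
  fixes n K :: nat and Q :: "nat \<Rightarrow> nat \<Rightarrow> bool"
  assumes nK: "2*K \<le> n"
    and S0: "\<And>a b. a + b < K \<Longrightarrow> Q a b"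
    and S1: "\<And>a b. a + b < K \<Longrightarrow> Q (n-1-a) (n-1-b)"
    and cl: "\<And>a b. a < n \<Longrightarrow> b < n \<Longrightarrow>
        2*K \<le> card {a'. a' < n \<and> a' \<noteq> a \<and> Q a' b} + card {b'. b' < n \<and> b' \<noteq> b \<and> Q a b'} \<Longrightarrow> Q a b"
  shows "i < K \<Longrightarrow> j < K \<Longrightarrow> Q i (n-1-j)"
proof (induction "i+j" arbitrary: i j rule: less_induct)
  case less
  have row: "{0..<K-i} \<union> {n-j..<n} \<subseteq> {b'. b' < n \<and> b' \<noteq> n-1-j \<and> Q i b'}"
  proof
    fix b' assume "b' \<in> {0..<K-i} \<union> {n-j..<n}"
    then consider "b' < K - i" | "n - j \<le> b'" "b' < n" by auto
    then show "b' \<in> {b'. b' < n \<and> b' \<noteq> n-1-j \<and> Q i b'}"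
    proof cases
      case 1 then show ?thesis using S0[of i b'] less nK by auto
    next
      case 2
      define j' where "j' = n-1-b'"
      have "j' < j" "b' = n-1-j'" using 2 less nK by (auto simp: j'_def)
      then show ?thesis using less.hyps[of i j'] less.prems 2 nK by auto
    qed
  qed
  have col: "{0..<i} \<union> {n-(K-j)..<n} \<subseteq> {a'. a' < n \<and> a' \<noteq> i \<and> Q a' (n-1-j)}"
  proof
    fix a' assume "a' \<in> {0..<i} \<union> {n-(K-j)..<n}"
    then consider "a' < i" | "n-(K-j) \<le> a'" "a' < n" by auto
    then show "a' \<in> {a'. a' < n \<and> a' \<noteq> i \<and> Q a' (n-1-j)}"
    proof cases
      case 1 then show ?thesis using less.hyps[of a' j] less.prems nK by auto
    next
      case 2
      define a where "a = n-1-a'"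
      have "a + j < K" "a' = n-1-a" using 2 less nK by (auto simp: a_def)
      then show ?thesis using S1[of a j] 2 less nK by auto
    qed
  qed
  have c1: "card ({0..<K-i} \<union> {n-j..<n}) = (K-i) + j"
    using less nK by (subst card_Un_disjoint) auto
  have c2: "card ({0..<i} \<union> {n-(K-j)..<n}) = i + (K-j)"
    using less nK by (subst card_Un_disjoint) auto
  show ?case
    by (rule plane_cl[OF cl _ _ col row]) (use less nK c1 c2 in auto)
qed

lemma plane:
  fixes n K :: nat and Q :: "nat \<Rightarrow> nat \<Rightarrow> bool"
  assumes nK: "2*K \<le> n"
    and S0: "\<And>a b. a + b < K \<Longrightarrow> Q a b"
    and S1: "\<And>a b. a + b < K \<Longrightarrow> Q (n-1-a) (n-1-b)"
    and cl: "\<And>a b. a < n \<Longrightarrow> b < n \<Longrightarrow>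
        2*K \<le> card {a'. a' < n \<and> a' \<noteq> a \<and> Q a' b} + card {b'. b' < n \<and> b' \<noteq> b \<and> Q a b'} \<Longrightarrow> Q a b"
    and ab: "a < n" "b < n"
  shows "Q a b"
proof -
  have B1: "\<And>i j. i < K \<Longrightarrow> j < K \<Longrightarrow> Q i (n-1-j)"
    using plane_B1[where Q=Q and K=K and n=n, OF nK S0 S1 cl] by blast
  have B2: "Q (n-1-j) i" if "i < K" "j < K" for i j
  proof -
    have "(\<lambda>a b. Q b a) i (n-1-j)"
    proof (rule plane_B1[OF nK, where Q="\<lambda>a b. Q b a"])
      show "Q b a" if "a + b < K" for a b using S0[of b a] that by simp
      show "Q (n-1-b) (n-1-a)" if "a + b < K" for a b using S1[of b a] that by simp
      show "Q b a" if "a < n" "b < n"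
        "2*K \<le> card {a'. a' < n \<and> a' \<noteq> a \<and> Q b a'} + card {b'. b' < n \<and> b' \<noteq> b \<and> Q b' a}" for a b
        using that by (intro cl) linarith+
    qed (use that in auto)
    then show ?thesis by simp
  qed
  have B0: "Q i j" if "i < K" "j < K" for i j
  proof (rule plane_cl[OF cl, where A="{n-K..<n}" and B="{n-K..<n}"])
    show "{n-K..<n} \<subseteq> {a'. a' < n \<and> a' \<noteq> i \<and> Q a' j}"
    proof
      fix a' assume a': "a' \<in> {n-K..<n}"
      then have "a' = n-1-(n-1-a')" "n-1-a' < K" by auto
      then show "a' \<in> {a'. a' < n \<and> a' \<noteq> i \<and> Q a' j}" using B2[of j "n-1-a'"] a' that nK by auto
    qed
    show "{n-K..<n} \<subseteq> {b'. b' < n \<and> b' \<noteq> j \<and> Q i b'}"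
    proof
      fix b' assume b': "b' \<in> {n-K..<n}"
      then have "b' = n-1-(n-1-b')" "n-1-b' < K" by auto
      then show "b' \<in> {b'. b' < n \<and> b' \<noteq> j \<and> Q i b'}" using B1[of i "n-1-b'"] b' that nK by auto
    qed
  qed (use that nK in auto)
  have B3: "Q (n-1-i) (n-1-j)" if "i < K" "j < K" for i j
  proof (rule plane_cl[OF cl, where A="{0..<K}" and B="{0..<K}"])
    show "{0..<K} \<subseteq> {a'. a' < n \<and> a' \<noteq> n-1-i \<and> Q a' (n-1-j)}"
      using B1 that nK by auto
    show "{0..<K} \<subseteq> {b'. b' < n \<and> b' \<noteq> n-1-j \<and> Q (n-1-i) b'}"
      using B2 that nK by auto
  qed (use that nK in auto)
  define R where "R = {0..<K} \<union> {n-K..<n}"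
  have cR: "card R = 2*K" unfolding R_def using nK by (subst card_Un_disjoint) auto
  have RR: "Q a b" if abR: "a \<in> R" "b \<in> R" for a b
  proof -
    consider "a < K" "b < K" | "a < K" "n-K \<le> b" "b < n" | "n-K \<le> a" "a < n" "b < K"
      | "n-K \<le> a" "a < n" "n-K \<le> b" "b < n" using abR unfolding R_def by auto
    then show ?thesis
    proof cases
      case 1 then show ?thesis using B0 by auto
    next
      case 2 then show ?thesis using B1[of a "n-1-b"] by auto
    next
      case 3 then show ?thesis using B2[of b "n-1-a"] by auto
    next
      case 4 then show ?thesis using B3[of "n-1-a" "n-1-b"] by auto
    qed
  qed
  have Rn: "R \<subseteq> {..<n}" unfolding R_def using nK by auto
  have RA: "Q a b" if "a \<in> R" "b < n" for a b
  proof (cases "b \<in> R")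
    case True then show ?thesis using RR that by auto
  next
    case False
    show ?thesis
      by (rule plane_cl[OF cl, where A="{}" and B=R]) (use that False RR Rn cR in auto)
  qed
  show ?thesis
  proof (cases "a \<in> R")
    case True then show ?thesis using RA ab by auto
  next
    case False
    show ?thesis
      by (rule plane_cl[OF cl, where A=R and B="{}"]) (use ab False RA Rn cR in auto)
  qed
qed


definition dep :: "nat \<Rightarrow> nat \<Rightarrow> nat" where "dep n c = min c (n-1-c)"
definition side :: "nat \<Rightarrow> nat \<Rightarrow> nat" where "side n c = (if c \<le> n-1-c then 0 else 1)"
definition Dsum :: "nat \<Rightarrow> nat list \<Rightarrow> nat" where
  "Dsum n x = (\<Sum>i\<in>{2..<length x}. dep n (x!i))"

lemma card_low:
  assumes "v < n"
  shows "card {c. c < n \<and> dep n c < dep n v} = 2 * dep n v"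
proof -
  have "{c. c < n \<and> dep n c < dep n v} = {0..<dep n v} \<union> {n - dep n v..<n}"
    using assms by (auto simp: dep_def)
  moreover have "card ({0..<dep n v} \<union> {n - dep n v..<n}) = 2 * dep n v"
    using assms by (subst card_Un_disjoint) (auto simp: dep_def)
  ultimately show ?thesis by simp
qed

lemma finite_hverts: "finite (hverts n d)"
proof -
  have "hverts n d \<subseteq> {xs. set xs \<subseteq> {..<n} \<and> length xs = d}"
    by (auto simp: hverts_def in_set_conv_nth)
  then show ?thesis using finite_lists_length_eq[of "{..<n}" d] finite_subset by blast
qed

lemma hverts_upd:
  assumes "y \<in> hverts n d" "c < n" shows "y[i:=c] \<in> hverts n d"
proof -
  have "y[i:=c] ! j < n" if "j < d" for j
    using assms that by (cases "j = i") (auto simp: hverts_def)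
  then show ?thesis using assms by (simp add: hverts_def)
qed

lemma adj_upd:
  assumes "length y = d" "i < d" "c \<noteq> y!i"
  shows "hadj d y (y[i:=c])"
proof -
  have "{j. j < d \<and> y!j \<noteq> y[i:=c]!j} = {i}"
    using assms by (auto simp: nth_list_update)
  then show ?thesis by (simp add: hadj_def)
qed

lemma Dsum_upd01: "i < 2 \<Longrightarrow> Dsum n (y[i:=c]) = Dsum n y"
  unfolding Dsum_def by (auto intro!: sum.cong)

lemma Dsum_upd_low:
  assumes "2 \<le> i" "i < length y" "dep n c < dep n (y!i)"
  shows "Dsum n (y[i:=c]) < Dsum n y"
  unfolding Dsum_def length_list_update
proof (rule sum_strict_mono_ex1)
  show "\<forall>j\<in>{2..<length y}. dep n (y[i := c] ! j) \<le> dep n (y ! j)"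
    using assms by (auto simp: nth_list_update)
  show "\<exists>j\<in>{2..<length y}. dep n (y[i := c] ! j) < dep n (y ! j)"
    using assms by (intro bexI[of _ i]) auto
qed simp

definition Low :: "nat \<Rightarrow> nat list \<Rightarrow> nat list set" where
  "Low n y = (\<lambda>(i,c). y[i:=c]) ` (SIGMA i:{2..<length y}. {c. c < n \<and> dep n c < dep n (y!i)})"

lemma card_Low:
  assumes "y \<in> hverts n d"
  shows "card (Low n y) = 2 * Dsum n y"
proof -
  have len: "length y = d" using assms by (simp add: hverts_def)
  have inj: "inj_on (\<lambda>(i,c). y[i:=c]) (SIGMA i:{2..<length y}. {c. c < n \<and> dep n c < dep n (y!i)})"
  proof (rule inj_onI, clarify)
    fix i c i' c'
    assume h: "y[i:=c] = y[i':=c']" "i \<in> {2..<length y}" "c < n" "dep n c < dep n (y!i)"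
       "i' \<in> {2..<length y}" "c' < n" "dep n c' < dep n (y!i')"
    show "i = i' \<and> c = c'"
    proof (cases "i = i'")
      case True
      then show ?thesis using h(1,2) by (metis atLeastLessThan_iff nth_list_update_eq)
    next
      case False
      have "y[i:=c] ! i = c" using h(2) by simp
      moreover have "y[i':=c'] ! i = y ! i" using False by simp
      ultimately have "c = y!i" using h(1) by simp
      then show ?thesis using h(4) by simp
    qed
  qed
  have "card (Low n y) = (\<Sum>i\<in>{2..<length y}. card {c. c < n \<and> dep n c < dep n (y!i)})"
    unfolding Low_def by (subst card_image[OF inj]) simp
  also have "\<dots> = (\<Sum>i\<in>{2..<length y}. 2 * dep n (y!i))"
    using assms by (intro sum.cong refl card_low) (auto simp: hverts_def)
  also have "\<dots> = 2 * Dsum n y" by (simp add: Dsum_def sum_distrib_left)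
  finally show ?thesis .
qed

lemma Low_props:
  assumes "y \<in> hverts n d" "u \<in> Low n y"
  shows "u \<in> hverts n d" "hadj d y u" "Dsum n u < Dsum n y" "u!0 = y!0" "u!1 = y!1"
proof -
  obtain i c where u: "u = y[i:=c]" "2 \<le> i" "i < length y" "c < n" "dep n c < dep n (y!i)"
    using assms(2) unfolding Low_def by auto
  have len: "length y = d" using assms by (simp add: hverts_def)
  show "u \<in> hverts n d" using u assms hverts_upd by blast
  have "c \<noteq> y!i" using u by auto
  then show "hadj d y u" using adj_upd[OF len] u len by simp
  show "Dsum n u < Dsum n y" using Dsum_upd_low u by simp
  show "u!0 = y!0" "u!1 = y!1" using u by auto
qed


lemma sum_list_upt_map: "sum_list (map f [0..<d]) = sum f {0..<d}"
  by (metis atLeastLessThan_upt sum_set_upt_conv_sum_list_nat)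

lemma in_calA:
  assumes xV: "x \<in> hverts n d" and d2: "2 \<le> d" and ab: "a < n" "b < n" and tt: "tt \<le> 1"
    and base: "\<And>p. p \<in> hverts n d \<Longrightarrow> sum_list p < k \<Longrightarrow> p \<in> base_set n d r"
    and s: "a + b + Dsum n x < k"
  shows "x[0 := tt*(n-1-a) + (1-tt)*a, 1 := tt*(n-1-b) + (1-tt)*b] \<in> calA n d r"
proof -
  define t where "t = map (\<lambda>i. if i < 2 then tt else side n (x!i)) [0..<d]"
  define f where "f = (\<lambda>i. if i = 0 then a else if i = 1 then b else dep n (x!i))"
  define p where "p = map f [0..<d]"
  define y where "y = x[0 := tt*(n-1-a) + (1-tt)*a, 1 := tt*(n-1-b) + (1-tt)*b]"
  have len: "length x = d" using xV by (simp add: hverts_def)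
  have xn: "\<And>i. i < d \<Longrightarrow> x!i < n" using xV by (simp add: hverts_def)
  have tt01: "tt = 0 \<or> tt = 1" using tt by auto
  have tT: "t \<in> Tset d"
    unfolding Tset_def t_def using d2 tt01 by (auto simp: side_def)
  have pV: "p \<in> hverts n d"
    unfolding hverts_def p_def f_def using ab xn by (auto simp: dep_def)
  have "sum_list p = sum f {0..<d}" unfolding p_def by (rule sum_list_upt_map)
  also have "\<dots> = f 0 + (f 1 + sum f {2..<d})"
    using d2 by (simp add: sum.atLeast_Suc_lessThan numeral_2_eq_2)
  also have "sum f {2..<d} = Dsum n x"
    unfolding Dsum_def len f_def by (rule sum.cong) auto
  finally have "sum_list p = a + b + Dsum n x" by (simp add: f_def)
  then have pB: "p \<in> base_set n d r" using base pV s by simp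
  have v1: "tt*(n-1-a) + (1-tt)*a < n" "tt*(n-1-b) + (1-tt)*b < n"
    using tt01 ab by auto
  have yV: "y \<in> hverts n d" unfolding y_def using v1 xV by (intro hverts_upd) auto
  have "y!i = t!i*(n-1-p!i) + (1-t!i)*p!i" if "i < d" for i
  proof -
    consider "i = 0" | "i = 1" | "2 \<le> i" by linarith
    then show ?thesis
    proof cases
      case 1 then show ?thesis using that d2 len tt01 by (auto simp: y_def t_def p_def f_def)
    next
      case 2 then show ?thesis using that d2 len tt01 by (auto simp: y_def t_def p_def f_def)
    next
      case 3
      have "y!i = x!i" using 3 by (simp add: y_def)
      moreover have "t!i = side n (x!i)" "p!i = dep n (x!i)" using 3 that by (auto simp: t_def p_def f_def)
      ultimately show ?thesis using xn[OF that] by (auto simp: side_def dep_def)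
    qed
  qed
  then have "y \<in> reflect n d (base_set n d r) t"
    unfolding reflect_def using yV pB by blast
  then show ?thesis unfolding calA_def y_def[symmetric] using tT by blast
qed


lemma comb:
  assumes d2: "2 \<le> d" and nk: "2*k \<le> n" and rk: "r \<le> 2*k"
    and base: "\<And>p. p \<in> hverts n d \<Longrightarrow> sum_list p < k \<Longrightarrow> p \<in> base_set n d r"
    and AC: "calA n d r \<subseteq> C"
    and clo: "\<And>v. v \<in> hverts n d \<Longrightarrow> r \<le> card {u \<in> hverts n d. hadj d v u \<and> u \<in> C} \<Longrightarrow> v \<in> C"
  shows "x \<in> hverts n d \<Longrightarrow> x \<in> C"
proof (induction "Dsum n x" arbitrary: x rule: less_induct)
  case less
  have cloS: "y \<in> C" if "y \<in> hverts n d" "S \<subseteq> hverts n d" "\<forall>u\<in>S. hadj d y u" "S \<subseteq> C" "r \<le> card S" for y S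
  proof -
    have "S \<subseteq> {u \<in> hverts n d. hadj d y u \<and> u \<in> C}" using that by auto
    then have "card S \<le> card {u \<in> hverts n d. hadj d y u \<and> u \<in> C}"
      by (rule card_mono[rotated]) (simp add: finite_hverts)
    then show ?thesis using clo that by fastforce
  qed
  have LowC: "Low n y \<subseteq> C" if "y \<in> hverts n d" "Dsum n y = Dsum n x" for y
  proof
    fix u assume "u \<in> Low n y"
    then have "u \<in> hverts n d" "Dsum n u < Dsum n x" using Low_props[OF that(1)] that(2) by auto
    then show "u \<in> C" using less.hyps by blast
  qed
  have len: "length x = d" using less.prems by (simp add: hverts_def)
  show ?case
  proof (cases "k \<le> Dsum n x")
    case True
    show ?thesis
    proof (rule cloS[OF less.prems, of "Low n x"])
      show "Low n x \<subseteq> hverts n d" "\<forall>u\<in>Low n x. hadj d x u"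
        using Low_props[OF less.prems] by auto
      show "Low n x \<subseteq> C" using LowC[OF less.prems] by simp
      show "r \<le> card (Low n x)" using card_Low[OF less.prems] True rk by simp
    qed
  next
    case False
    define K where "K = k - Dsum n x"
    define Q where "Q = (\<lambda>a b. x[0:=a,1:=b] \<in> C)"
    have "Q (x!0) (x!1)"
    proof (rule plane[where K=K and n=n])
      show "2*K \<le> n" using nk by (simp add: K_def)
      show "Q a b" if "a + b < K" for a b
        using in_calA[OF less.prems d2 _ _ _ base, of a b 0] that AC nk False
        unfolding Q_def K_def by auto
      show "Q (n-1-a) (n-1-b)" if "a + b < K" for a b
        using in_calA[OF less.prems d2 _ _ _ base, of a b 1] that AC nk False
        unfolding Q_def K_def by auto
      show "Q a b" if ab: "a < n" "b < n"
        and cs: "2*K \<le> card {a'. a' < n \<and> a' \<noteq> a \<and> Q a' b} + card {b'. b' < n \<and> b' \<noteq> b \<and> Q a b'}" for a b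
      proof -
        define y where "y = x[0:=a,1:=b]"
        define A where "A = {a'. a' < n \<and> a' \<noteq> a \<and> Q a' b}"
        define B where "B = {b'. b' < n \<and> b' \<noteq> b \<and> Q a b'}"
        define I1 where "I1 = (\<lambda>a'. y[0:=a']) ` A"
        define I2 where "I2 = (\<lambda>b'. y[1:=b']) ` B"
        have yV: "y \<in> hverts n d" unfolding y_def using less.prems ab by (intro hverts_upd) auto
        have leny: "length y = d" using len by (simp add: y_def)
        have y0: "y!0 = a" and y1: "y!1 = b" using d2 len by (auto simp: y_def)
        have Dy: "Dsum n y = Dsum n x" unfolding y_def by (simp add: Dsum_upd01)
        have upd0: "y[0:=a'] = x[0:=a',1:=b]" for a'
          unfolding y_def by (metis list_update_overwrite list_update_swap zero_neq_one)
        have upd1: "y[1:=b'] = x[0:=a,1:=b']" for b'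
          unfolding y_def by simp
        have inj1: "inj_on (\<lambda>a'. y[0:=a']) A"
          proof (rule inj_onI)
            fix a1 a2 assume "y[0:=a1] = y[0:=a2]"
            then have "y[0:=a1]!0 = y[0:=a2]!0" by simp
            then show "a1 = a2" using d2 leny by simp
          qed
        have inj2: "inj_on (\<lambda>b'. y[1:=b']) B"
          proof (rule inj_onI)
            fix a1 a2 assume "y[1:=a1] = y[1:=a2]"
            then have "y[1:=a1]!1 = y[1:=a2]!1" by simp
            then show "a1 = a2" using d2 leny by simp
          qed
        have finA: "finite A" and finB: "finite B" unfolding A_def B_def by auto
        have cI1: "card I1 = card A" unfolding I1_def by (rule card_image[OF inj1])
        have cI2: "card I2 = card B" unfolding I2_def by (rule card_image[OF inj2])
        have I1p: "u \<in> hverts n d \<and> hadj d y u \<and> u \<in> C \<and> u!0 \<noteq> a" if uI: "u \<in> I1" for u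
        proof -
          obtain a' where a': "u = y[0:=a']" "a' \<in> A" using uI unfolding I1_def by auto
          have "u \<in> hverts n d" using a' yV hverts_upd A_def by auto
          moreover have "hadj d y u" using a' adj_upd[OF leny, of 0 a'] d2 y0 A_def by auto
          moreover have "u \<in> C" using a' upd0 A_def Q_def by auto
          moreover have "u!0 \<noteq> a" using a' d2 leny A_def by auto
          ultimately show ?thesis by blast
        qed
        have I2p: "u \<in> hverts n d \<and> hadj d y u \<and> u \<in> C \<and> u!0 = a \<and> u!1 \<noteq> b" if uI: "u \<in> I2" for u
        proof -
          obtain b' where b': "u = y[1:=b']" "b' \<in> B" using uI unfolding I2_def by auto
          have "u \<in> hverts n d" using b' yV hverts_upd B_def by auto
          moreover have "hadj d y u" using b' adj_upd[OF leny, of 1 b'] d2 y1 B_def by auto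
          moreover have "u \<in> C" using b' upd1 B_def Q_def by auto
          moreover have "u!0 = a \<and> u!1 \<noteq> b" using b' d2 leny B_def y0 by auto
          ultimately show ?thesis by blast
        qed
        have finL: "finite (Low n y)"
          by (rule finite_subset[OF _ finite_hverts]) (use Low_props(1)[OF yV] in blast)
        have fin1: "finite I1" "finite I2" unfolding I1_def I2_def using finA finB by auto
        have disj1: "I1 \<inter> I2 = {}"
        proof (rule equals0I)
          fix u assume "u \<in> I1 \<inter> I2" then show False using I1p[of u] I2p[of u] by auto
        qed
        have disj2: "(I1 \<union> I2) \<inter> Low n y = {}"
        proof (rule equals0I)
          fix u assume "u \<in> (I1 \<union> I2) \<inter> Low n y"
          then show False using I1p[of u] I2p[of u] Low_props(4,5)[OF yV, of u] y0 y1 by auto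
        qed
        have cS: "card (I1 \<union> I2 \<union> Low n y) = card A + card B + 2 * Dsum n x"
          using card_Un_disjoint[OF _ finL disj2] card_Un_disjoint[OF fin1 disj1] fin1 cI1 cI2
            card_Low[OF yV] Dy by simp
        have "y \<in> C"
        proof (rule cloS[OF yV, of "I1 \<union> I2 \<union> Low n y"])
          show "I1 \<union> I2 \<union> Low n y \<subseteq> hverts n d" using I1p I2p Low_props(1)[OF yV] by blast
          show "\<forall>u\<in>I1 \<union> I2 \<union> Low n y. hadj d y u" using I1p I2p Low_props(2)[OF yV] by blast
          show "I1 \<union> I2 \<union> Low n y \<subseteq> C" using I1p I2p LowC[OF yV Dy] by blast
          show "r \<le> card (I1 \<union> I2 \<union> Low n y)" using cS cs rk False
            unfolding A_def B_def K_def by linarith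
        qed
        then show ?thesis by (simp add: Q_def y_def)
      qed
      show "x!0 < n" "x!1 < n" using less.prems d2 by (auto simp: hverts_def)
    qed
    then show ?thesis by (simp add: Q_def)
  qed
qed


theorem lemma4p1:
  fixes n r d :: nat
  assumes "0 < n" and "0 < r" and "0 < d" and "n \<ge> r + 1" and "d \<ge> 2"
  shows "percolating (hverts n d) (hadj d) r (calA n d r)"
proof -
  define V where "V = hverts n d"
  define E where "E = hadj d"
  define act where "act = bp_active V E r (calA n d r)"
  define C where "C = (\<Union>i. act i)"
  define k where "k = nat \<lceil>real r / 2\<rceil>"
  have c0: "0 \<le> \<lceil>real r / 2\<rceil>" by simp
  have kc: "int k = \<lceil>real r / 2\<rceil>" unfolding k_def using c0 by simp
  have "real r / 2 \<le> real k" using kc le_of_int_ceiling[of "real r / 2"]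
    by (metis of_int_of_nat_eq)
  then have rk: "r \<le> 2*k" by linarith
  have "\<lceil>real r / 2\<rceil> \<le> int ((r+1) div 2)"
    by (rule ceiling_le) linarith
  then have "2*k \<le> r + 1" using kc by linarith
  then have nk: "2*k \<le> n" using assms(4) by linarith
  have base: "p \<in> base_set n d r" if "p \<in> hverts n d" "sum_list p < k" for p
  proof -
    have "int (sum_list p) \<le> \<lceil>real r / 2\<rceil> - 1" using that(2) kc by linarith
    then have "real_of_int (int (sum_list p)) \<le> real_of_int (\<lceil>real r / 2\<rceil> - 1)"
      by (simp only: of_int_le_iff)
    then show ?thesis using that(1) by (simp add: base_set_def)
  qed
  have A0V: "calA n d r \<subseteq> V" unfolding V_def calA_def reflect_def by auto
  have act_Suc: "act (Suc i) = bp_step V E r (act i)" for i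
    unfolding act_def bp_active_def by simp
  have actV: "act i \<subseteq> V" for i
  proof (induction i)
    case 0 then show ?case using A0V by (simp add: act_def bp_active_def)
  next
    case (Suc i) then show ?case by (auto simp: act_Suc bp_step_def)
  qed
  have mono: "act i \<subseteq> act j" if "i \<le> j" for i j
    by (rule lift_Suc_mono_le[of act, OF _ that]) (auto simp: act_Suc bp_step_def)
  have finsub: "finite S \<Longrightarrow> S \<subseteq> C \<Longrightarrow> \<exists>m. S \<subseteq> act m" for S
  proof (induction S rule: finite_induct)
    case empty then show ?case by simp
  next
    case (insert x S)
    then obtain m where m: "S \<subseteq> act m" by auto
    obtain i where i: "x \<in> act i" using insert.prems unfolding C_def by auto
    have "insert x S \<subseteq> act (max i m)" using m i mono[of i "max i m"] mono[of m "max i m"] by auto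
    then show ?case by blast
  qed
  have clo: "v \<in> C" if "v \<in> hverts n d" "r \<le> card {u \<in> hverts n d. hadj d v u \<and> u \<in> C}" for v
  proof -
    define S where "S = {u \<in> hverts n d. hadj d v u \<and> u \<in> C}"
    have "finite S" unfolding S_def by (rule finite_subset[OF _ finite_hverts]) auto
    then obtain m where m: "S \<subseteq> act m" using finsub[of S] unfolding S_def by auto
    have "S \<subseteq> {u \<in> V. E v u \<and> u \<in> act m}" using m unfolding S_def V_def E_def by auto
    then have "card S \<le> card {u \<in> V. E v u \<and> u \<in> act m}"
      by (rule card_mono[rotated]) (auto intro: finite_subset[OF _ finite_hverts] simp: V_def)
    then have "v \<in> act (Suc m)" using that unfolding act_Suc bp_step_def S_def V_def by auto
    then show ?thesis unfolding C_def by blast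
  qed
  have AC: "calA n d r \<subseteq> C" unfolding C_def using act_def bp_active_def
    by (metis UN_upper funpow_0 iso_tuple_UNIV_I)
  have "V \<subseteq> C"
    using comb[OF assms(5) nk rk base AC clo] unfolding V_def by blast
  moreover have "C \<subseteq> V" unfolding C_def using actV by blast
  ultimately show ?thesis unfolding percolating_def using A0V
    by (simp add: C_def act_def V_def E_def)
qed

end
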